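(* Let $n\ge 2$, $f\in\mathfrak{F}_{sc}$, and let $\rho$ be a density matrix on $\mathbb{C}^n$ whose diagonal entries $\rho_{11},\dots,\rho_{nn}$ are all strictly positive. Let $CM(\rho)=\Delta(\rho)^{-1/2}\rho\,\Delta(\rho)^{-1/2}$. If $CM(\rho)$ is a convex combination of rank-one correlation matrices, then there exists a pure state decomposition $\mathfrak{D}$ of $\rho$ with $\bar C_f(\mathfrak{D})=f(\rho_{11},\rho_{22},\dots,\rho_{nn})$.
   Context: Fix the reference orthonormal basis $\{|i\rangle\}_{i=1}^n$ of $\mathbb{C}^n$. Let $\Omega$ be the probability simplex in $\mathbb{R}^n$. $\mathfrak{F}_{sc}$ denotes the set of functions $f:\Omega\to\mathbb{R}$ such that (i) $f((1,0,\dots,0)^T)=0$; (ii) $f(P\mathbf{x})=f(\mathbf{x})$ for every permutation matrix $P$; (iii) $f$ is concave. For a unit vector $|\psi\rangle=\sum_i\psi_i|i\rangle$, $C_f(|\psi\rangle)=f(|\psi_1|^2,\dots,|\psi_n|^2)$. A pure state decomposition of $\rho$ is a finite family $\{p_k,|\psi_k\rangle\}$ with $p_k>0$, $\sum_kp_k=1$, unit vectors $|\psi_k\rangle$ and $\rho=\sum_kp_k|\psi_k\rangle\langle\psi_k|$; its average coherence is $\bar C_f(\mathfrak{D})=\sum_kp_kC_f(|\psi_k\rangle)$. $\Delta(X)$ is the diagonal matrix with the same diagonal entries as $X$ in the reference basis. A correlation matrix is a positive semidefinite matrix all of whose diagonal entries equal $1$. *)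

theory Defs
  imports "HOL-Analysis.Analysis"
begin

text \<open>Finite dimensional setting: C^n is complex^'n, the reference basis is the
standard basis (axis i 1), matrices are complex^'n^'n.\<close>

definition prob_simplex :: "(real^'n) set" where
  "prob_simplex = {x. (\<forall>i. 0 \<le> x$i) \<and> (\<Sum>i\<in>UNIV. x$i) = 1}"

text \<open>Permutation matrices act on R^n by permuting coordinates.\<close>
definition perm_vec :: "('n \<Rightarrow> 'n) \<Rightarrow> real^'n \<Rightarrow> real^'n" where
  "perm_vec \<sigma> x = (\<chi> i. x $ (\<sigma> i))"

definition F_sc :: "(real^'n \<Rightarrow> real) set" where
  "F_sc = {f. (\<forall>i. f (axis i 1) = 0)
            \<and> (\<forall>\<sigma> x. \<sigma> permutes UNIV \<longrightarrow> x \<in> prob_simplex \<longrightarrow> f (perm_vec \<sigma> x) = f x)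
            \<and> concave_on prob_simplex f}"

definition coh :: "(real^'n \<Rightarrow> real) \<Rightarrow> complex^'n \<Rightarrow> real" where
  "coh f \<psi> = f (\<chi> i. (cmod (\<psi>$i))\<^sup>2)"

definition psd :: "complex^'n^'n \<Rightarrow> bool" where
  "psd A \<longleftrightarrow> (\<forall>i j. A$i$j = cnj (A$j$i)) \<and>
     (\<forall>x::complex^'n. 0 \<le> Re (\<Sum>i\<in>UNIV. \<Sum>j\<in>UNIV. cnj (x$i) * A$i$j * x$j))"

definition density_matrix :: "complex^'n^'n \<Rightarrow> bool" where
  "density_matrix \<rho> \<longleftrightarrow> psd \<rho> \<and> (\<Sum>i\<in>UNIV. \<rho>$i$i) = 1"

definition correlation_matrix :: "complex^'n^'n \<Rightarrow> bool" where
  "correlation_matrix A \<longleftrightarrow> psd A \<and> (\<forall>i. A$i$i = 1)"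

definition proj :: "complex^'n \<Rightarrow> complex^'n^'n" where
  "proj \<psi> = (\<chi> i j. \<psi>$i * cnj (\<psi>$j))"

definition diag_inv_sqrt :: "complex^'n^'n \<Rightarrow> complex^'n^'n" where
  "diag_inv_sqrt \<rho> = (\<chi> i j. if i = j then complex_of_real (1 / sqrt (Re (\<rho>$i$i))) else 0)"

definition CM :: "complex^'n^'n \<Rightarrow> complex^'n^'n" where
  "CM \<rho> = diag_inv_sqrt \<rho> ** \<rho> ** diag_inv_sqrt \<rho>"

text \<open>Pure state decomposition, given as a finite family indexed by {..<K}.\<close>
definition pure_state_decomp :: "complex^'n^'n \<Rightarrow> nat \<Rightarrow> (nat \<Rightarrow> real) \<Rightarrow> (nat \<Rightarrow> complex^'n) \<Rightarrow> bool" where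
  "pure_state_decomp \<rho> K p \<psi> \<longleftrightarrow>
     (\<forall>k<K. p k > 0 \<and> norm (\<psi> k) = 1) \<and> (\<Sum>k<K. p k) = 1 \<and>
     \<rho> = (\<Sum>k<K. p k *\<^sub>R proj (\<psi> k))"

definition avg_coh :: "(real^'n \<Rightarrow> real) \<Rightarrow> nat \<Rightarrow> (nat \<Rightarrow> real) \<Rightarrow> (nat \<Rightarrow> complex^'n) \<Rightarrow> real" where
  "avg_coh f K p \<psi> = (\<Sum>k<K. p k * coh f (\<psi> k))"

end

theory Submission imports Defs begin
lemma rank1_row:
  fixes A :: "complex^'n^'n"
  assumes "rank A = 1" "A$i0 \<noteq> 0"
  shows "\<exists>c. A$i = c *s A$i0"
proof (rule ccontr)
  assume nc: "\<not> ?thesis"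
  have "A$i \<notin> vec.span {A$i0}" using nc by (auto simp: vec.span_singleton)
  moreover have "vec.independent {A$i0}" using assms(2) by (simp add: vec.independent_insert)
  ultimately have ind: "vec.independent {A$i, A$i0}" by (simp add: vec.independent_insert)
  have ne: "A$i \<noteq> A$i0" using nc by (metis vector_smult_lid)
  have sub: "{A$i, A$i0} \<subseteq> rows A" by (auto simp: rows_def row_def)
  have "card {A$i, A$i0} \<le> vec.dim (rows A)"
    by (rule vec.independent_card_le_dim[OF sub ind])
  with ne assms(1) show False by (simp add: row_rank_def_gen)
qed
lemma rank1_corr:
  fixes A :: "complex^'n^'n"
  assumes "correlation_matrix A" "rank A = 1"
  shows "\<exists>v. A = proj v \<and> (\<forall>i. cmod (v$i) = 1)"
proof -
  fix i0 :: 'n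
  have herm: "\<And>i j. A$i$j = cnj (A$j$i)" and diag: "\<And>i. A$i$i = 1"
    using assms(1) unfolding correlation_matrix_def psd_def by blast+
  have "A$i0 \<noteq> 0" using diag[of i0] by (metis zero_index zero_neq_one)
  then have "\<forall>i. \<exists>c. A$i = c *s A$i0" using rank1_row[OF assms(2)] by blast
  then obtain c where c0: "\<And>i. A$i = c i *s A$i0" by metis
  define r where "r = A$i0"
  have c: "\<And>i. A$i = c i *s r" using c0 unfolding r_def by blast
  have Aij: "\<And>i j. A$i$j = c i * r$j"
  proof -
    fix i j
    have "A$i$j = (c i *s r)$j" by (simp only: c)
    then show "A$i$j = c i * r$j" by simp
  qed
  have r0: "r$i0 = 1" using diag[of i0] r_def by simp
  have ci: "\<And>i. c i = cnj (r$i)"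
  proof -
    fix i
    have "A$i$i0 = cnj (A$i0$i)" by (rule herm)
    then show "c i = cnj (r$i)" using Aij[of i i0] r0 r_def by simp
  qed
  have one: "\<And>i. cnj (r$i) * r$i = 1" using diag Aij ci by simp
  have nr: "\<And>i. cmod (r$i) = 1"
  proof -
    fix i
    have "cmod (cnj (r$i) * r$i) = 1" using one[of i] by simp
    then have "cmod (r$i) * cmod (r$i) = 1" by (simp add: norm_mult)
    then have "(cmod (r$i))\<^sup>2 = 1" by (simp add: power2_eq_square)
    then show "cmod (r$i) = 1" using norm_ge_zero[of "r$i"] by (simp add: power2_eq_1_iff)
  qed
  define v where "v = (\<chi> i. cnj (r$i))"
  have "A = proj v"
    by (simp add: vec_eq_iff proj_def v_def Aij ci)
  moreover have "\<forall>i. cmod (v$i) = 1" by (simp add: v_def nr)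
  ultimately show ?thesis by blast
qed
theorem theorem2:
  fixes f :: "real^'n \<Rightarrow> real" and \<rho> :: "complex^'n^'n"
  assumes "CARD('n) \<ge> 2"
    and "f \<in> F_sc"
    and "density_matrix \<rho>"
    and "\<forall>i. Re (\<rho>$i$i) > 0"
    and "CM \<rho> \<in> convex hull {A. correlation_matrix A \<and> rank A = 1}"
  shows "\<exists>K p \<psi>. pure_state_decomp \<rho> K p \<psi> \<and>
           avg_coh f K p \<psi> = f (\<chi> i. Re (\<rho>$i$i))"
proof -
  define d where "d i = Re (\<rho>$i$i)" for i
  define s where "s i = sqrt (d i)" for i
  have dpos: "\<And>i. d i > 0" using assms(4) d_def by simp
  have spos: "\<And>i. s i > 0" using dpos s_def by simp
  have ss: "\<And>i. s i * s i = d i" using dpos s_def by (simp add: less_imp_le)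
  have herm: "\<And>i j. \<rho>$i$j = cnj (\<rho>$j$i)"
    using assms(3) unfolding density_matrix_def psd_def by blast
  have tr: "(\<Sum>i\<in>UNIV. \<rho>$i$i) = 1" using assms(3) unfolding density_matrix_def by blast
  have dsum: "(\<Sum>i\<in>UNIV. d i) = 1"
  proof -
    have "(\<Sum>i\<in>UNIV. d i) = Re (\<Sum>i\<in>UNIV. \<rho>$i$i)" by (simp add: d_def)
    then show ?thesis using tr by simp
  qed
  have ifm: "\<And>P (a::complex) b. (if P then a else 0) * b = (if P then a * b else 0)"
    and ifm2: "\<And>P (a::complex) b. b * (if P then a else 0) = (if P then b * a else 0)" by simp_all
  have CMij: "\<And>i j. CM \<rho> $i$j = \<rho>$i$j * complex_of_real (1 / (s i * s j))"
  proof -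
    fix i j
    have 1: "(diag_inv_sqrt \<rho> ** \<rho>)$i$k = complex_of_real (1 / s i) * \<rho>$i$k" for k
      by (simp add: matrix_matrix_mult_def diag_inv_sqrt_def s_def d_def ifm ifm2)
    have "CM \<rho> $i$j = (\<Sum>k\<in>UNIV. (diag_inv_sqrt \<rho> ** \<rho>)$i$k * diag_inv_sqrt \<rho> $k$j)"
      unfolding CM_def by (simp add: matrix_matrix_mult_def)
    also have "\<dots> = (\<Sum>k\<in>UNIV. complex_of_real (1 / s i) * \<rho>$i$k * diag_inv_sqrt \<rho> $k$j)"
      by (simp only: 1)
    also have "\<dots> = complex_of_real (1 / s i) * \<rho>$i$j * complex_of_real (1 / s j)"
      by (simp add: diag_inv_sqrt_def s_def d_def ifm ifm2)
    finally show "CM \<rho> $i$j = \<rho>$i$j * complex_of_real (1 / (s i * s j))"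
      by (simp add: field_simps)
  qed
  have rhoij: "\<And>i j. \<rho>$i$j = complex_of_real (s i * s j) * CM \<rho> $i$j"
  proof -
    fix i j
    have "s i \<noteq> 0" "s j \<noteq> 0" using spos[of i] spos[of j] by simp_all
    then show "\<rho>$i$j = complex_of_real (s i * s j) * CM \<rho> $i$j"
      by (simp add: CMij field_simps)
  qed
  obtain S u where S: "finite S" "S \<subseteq> {A. correlation_matrix A \<and> rank A = 1}"
    and u0: "\<forall>x\<in>S. 0 \<le> u x" and u1: "sum u S = 1" and uS: "(\<Sum>v\<in>S. u v *\<^sub>R v) = CM \<rho>"
    using assms(5) unfolding convex_hull_explicit by blast
  define S' where "S' = {A\<in>S. u A > 0}"
  have S'S: "S' \<subseteq> S" and finS': "finite S'" using S(1) by (auto simp: S'_def)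
  have z: "\<forall>x\<in>S - S'. u x = 0" using u0 by (auto simp: S'_def)
  have u1': "sum u S' = 1" using u1 sum.mono_neutral_left[OF S(1) S'S, of u] z by simp
  have uS': "(\<Sum>v\<in>S'. u v *\<^sub>R v) = CM \<rho>"
    using uS sum.mono_neutral_left[OF S(1) S'S, of "\<lambda>v. u v *\<^sub>R v"] z by simp
  obtain h where h: "bij_betw h {0..<card S'} S'" using ex_bij_betw_nat_finite[OF finS'] by blast
  define K where "K = card S'"
  have hK: "bij_betw h {..<K} S'" using h by (simp add: K_def lessThan_atLeast0)
  have hin: "\<And>k. k < K \<Longrightarrow> h k \<in> S'" using hK by (auto simp: bij_betw_def)
  define vs where "vs A = (SOME v. A = proj (v::complex^'n) \<and> (\<forall>i. cmod (v$i) = 1))" for A :: "complex^'n^'n"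
  have vsS: "\<And>A. A \<in> S' \<Longrightarrow> A = proj (vs A) \<and> (\<forall>i. cmod (vs A $i) = 1)"
  proof -
    fix A assume "A \<in> S'"
    then have "correlation_matrix A" "rank A = 1" using S(2) S'S by auto
    from rank1_corr[OF this] show "A = proj (vs A) \<and> (\<forall>i. cmod (vs A $i) = 1)"
      unfolding vs_def by (rule someI_ex)
  qed
  define p where "p k = u (h k)" for k
  define \<psi> where "\<psi> k = (\<chi> i. complex_of_real (s i) * vs (h k) $ i)" for k
  have psi_abs: "\<And>k i. k < K \<Longrightarrow> cmod (\<psi> k $ i) = s i"
    using vsS hin spos by (simp add: \<psi>_def norm_mult less_imp_le)
  have psum: "(\<Sum>k<K. p k) = 1"
    using sum.reindex_bij_betw[OF hK, of u] u1' by (simp add: p_def)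
  have ppos: "\<And>k. k < K \<Longrightarrow> p k > 0" using hin by (simp add: p_def S'_def)
  have pnorm: "\<And>k. k < K \<Longrightarrow> norm (\<psi> k) = 1"
  proof -
    fix k assume k: "k < K"
    have "norm (\<psi> k) = sqrt (\<Sum>i\<in>UNIV. (cmod (\<psi> k $ i))\<^sup>2)"
      by (simp add: norm_vec_def L2_set_def)
    also have "\<dots> = sqrt (\<Sum>i\<in>UNIV. d i)"
      using psi_abs[OF k] ss by (simp add: power2_eq_square)
    finally show "norm (\<psi> k) = 1" using dsum by simp
  qed
  have coh_eq: "\<And>k. k < K \<Longrightarrow> coh f (\<psi> k) = f (\<chi> i. Re (\<rho>$i$i))"
  proof -
    fix k assume k: "k < K"
    have "(\<chi> i. (cmod (\<psi> k $ i))\<^sup>2) = (\<chi> i. Re (\<rho>$i$i))"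
      using psi_abs[OF k] ss by (simp add: vec_eq_iff power2_eq_square d_def)
    then show "coh f (\<psi> k) = f (\<chi> i. Re (\<rho>$i$i))" by (simp add: coh_def)
  qed
  have decomp: "\<rho> = (\<Sum>k<K. p k *\<^sub>R proj (\<psi> k))"
  proof (simp add: vec_eq_iff, intro allI)
    fix i j
    have "(\<Sum>k<K. p k *\<^sub>R proj (\<psi> k) $ i $ j)
        = (\<Sum>k<K. complex_of_real (s i * s j) * (u (h k) *\<^sub>R h k $ i $ j))"
    proof (rule sum.cong[OF refl])
      fix k assume "k \<in> {..<K}"
      then have A: "h k = proj (vs (h k))" using vsS hin by blast
      show "p k *\<^sub>R proj (\<psi> k) $ i $ j = complex_of_real (s i * s j) * (u (h k) *\<^sub>R h k $ i $ j)"
        using arg_cong[OF A, of "\<lambda>M. M$i$j"]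
        by (simp add: p_def proj_def \<psi>_def scaleR_conv_of_real algebra_simps)
    qed
    also have "\<dots> = complex_of_real (s i * s j) * (\<Sum>k<K. u (h k) *\<^sub>R h k $ i $ j)"
      by (simp add: sum_distrib_left)
    also have "(\<Sum>k<K. u (h k) *\<^sub>R h k $ i $ j) = (\<Sum>A\<in>S'. u A *\<^sub>R A $ i $ j)"
      using sum.reindex_bij_betw[OF hK, of "\<lambda>A. u A *\<^sub>R A $ i $ j"] by simp
    also have "\<dots> = CM \<rho> $ i $ j" using uS' by (simp add: vec_eq_iff[symmetric] flip: uS')
    finally show "\<rho> $ i $ j = (\<Sum>k<K. p k *\<^sub>R proj (\<psi> k) $ i $ j)"
      using rhoij by simp
  qed
  have "pure_state_decomp \<rho> K p \<psi>"
    unfolding pure_state_decomp_def using ppos pnorm psum decomp by blast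
  moreover have "avg_coh f K p \<psi> = f (\<chi> i. Re (\<rho>$i$i))"
  proof -
    have "avg_coh f K p \<psi> = (\<Sum>k<K. p k * f (\<chi> i. Re (\<rho>$i$i)))"
      unfolding avg_coh_def by (rule sum.cong) (simp_all add: coh_eq)
    also have "\<dots> = f (\<chi> i. Re (\<rho>$i$i))" using psum by (simp flip: sum_distrib_right)
    finally show ?thesis .
  qed
  ultimately show ?thesis by blast
qed
end
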